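(* Let $n=3$ and $\tau=\tau_\mu\in\widehat{SO_3}$. Then $$\Phi^\tau_{\rho,2\mu-s}(y)=\Phi^\tau_{\rho,s}(-y)\qquad\forall y\in\mathbb R^3,\ \rho\ge0,\ s=0,\dots,2\mu,$$ so that if $F\in\mathcal S(\mathbb R^3,{\rm End}(V_\tau))^K$ is decomposed into its even part $F_+$ and odd part $F_-$, then $$\mathcal G^\sharp_\tau F_\pm(\rho^2,\lambda_{s,\tau}\rho)=\pm\mathcal G^\sharp_\tau F_\pm(\rho^2,-\lambda_{s,\tau}\rho)\qquad\forall\rho\ge0,\ s=0,\dots,2\mu.$$
   Context: $K=SO_3$ acts naturally on $\mathbb R^3$; $o=(1,0,0)$ with stabilizer $K_o\cong SO_2$. $\tau_\mu$ ($\mu\in\mathbb N$) is the irreducible representation of $SO_3$ of dimension $d_\tau=2\mu+1$ on $V_\tau=\bigoplus_{s=0}^{2\mu}U_s$, where $U_s$ is the line on which rotation of $K_o$ by angle $t$ acts by $e^{i(s-\mu)t}$; $P_{s,\tau}$ is the orthogonal projection onto $U_s$ and $\lambda_{s,\tau}=s-\mu$. $\mathcal S(\mathbb R^3,{\rm End}(V_\tau))^K$ is the space of Schwartz functions $F$ with $F(ky)=\tau(k)F(y)\tau(k)^{-1}$. The functions $\Phi^\tau_{\rho,s}(y)=d_\tau\int_Ke^{i\rho\,o\cdot(ky)}\tau(k^{-1})P_{s,\tau}\tau(k)\,dk$ are the ${\rm End}(V_\tau)$-valued spherical functions, and $\mathcal G^\sharp_\tau F(\rho^2,\lambda_{s,\tau}\rho)=\frac1{d_\tau}\int_{\mathbb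 R^3}{\rm tr}\big(F(y)\Phi^\tau_{\rho,s}(-y)\big)dy$ (note $-\lambda_{s,\tau}=\lambda_{2\mu-s,\tau}$). *)

theory Defs
  imports "HOL-Analysis.Analysis" "Jordan_Normal_Form.Schur_Decomposition"
begin

definition SO3 :: "(real^3^3) set" where
  "SO3 = {k. rotation_matrix k}"

definition pt_o :: "real^3" where
  "pt_o = axis 1 1"

text \<open>Rotations about the three coordinate axes. K_o (stabiliser of o) is
  the group of rotations rot_x t.\<close>
definition rot_x :: "real \<Rightarrow> real^3^3" where
  "rot_x t = vector [vector [1, 0, 0], vector [0, cos t, - sin t], vector [0, sin t, cos t]]"

definition rot_y :: "real \<Rightarrow> real^3^3" where
  "rot_y t = vector [vector [cos t, 0, sin t], vector [0, 1, 0], vector [- sin t, 0, cos t]]"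

text \<open>Normalised Haar integral on SO(3), written in (proper) Euler angles
  k = rot_x a * rot_y b * rot_x c, with Haar density sin b / (8 pi^2).\<close>
definition haar_SO3 :: "(real^3^3 \<Rightarrow> complex) \<Rightarrow> complex" where
  "haar_SO3 f = interval_lebesgue_integral lborel 0 (ereal (2*pi)) (\<lambda>a.
        interval_lebesgue_integral lborel 0 (ereal pi) (\<lambda>b.
        interval_lebesgue_integral lborel 0 (ereal (2*pi)) (\<lambda>c.
        complex_of_real (sin b / (8 * pi^2)) * f (rot_x a ** rot_y b ** rot_x c))))"

definition haar_SO3_mat :: "nat \<Rightarrow> (real^3^3 \<Rightarrow> complex mat) \<Rightarrow> complex mat" where
  "haar_SO3_mat d F = mat d d (\<lambda>(i,j). haar_SO3 (\<lambda>k. F k $$ (i,j)))"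

definition mtrace :: "complex mat \<Rightarrow> complex" where
  "mtrace A = (\<Sum>i<dim_row A. A $$ (i,i))"

definition unitary_mat :: "nat \<Rightarrow> complex mat \<Rightarrow> bool" where
  "unitary_mat d A \<longleftrightarrow> A \<in> carrier_mat d d \<and> A * mat_adjoint A = 1\<^sub>m d"

definition irreducible_rep :: "nat \<Rightarrow> (real^3^3 \<Rightarrow> complex mat) \<Rightarrow> bool" where
  "irreducible_rep d \<tau> \<longleftrightarrow>
     (\<forall>W. W \<subseteq> carrier_vec d \<and> 0\<^sub>v d \<in> W
          \<and> (\<forall>v\<in>W. \<forall>w\<in>W. v + w \<in> W) \<and> (\<forall>c. \<forall>v\<in>W. c \<cdot>\<^sub>v v \<in> W)
          \<and> (\<forall>k\<in>SO3. \<forall>v\<in>W. \<tau> k *\<^sub>v v \<in> W)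
        \<longrightarrow> W = {0\<^sub>v d} \<or> W = carrier_vec d)"

text \<open>tau is (a matrix model of) the irreducible representation tau_mu of SO(3):
  a continuous unitary irreducible representation of dimension 2 mu + 1 such that
  rotation of K_o by angle t acts on the line U_s = C e_s by e^(i(s-mu)t).\<close>
definition is_tau_mu :: "nat \<Rightarrow> (real^3^3 \<Rightarrow> complex mat) \<Rightarrow> bool" where
  "is_tau_mu \<mu> \<tau> \<longleftrightarrow>
     (let d = 2*\<mu>+1 in
       (\<forall>k\<in>SO3. unitary_mat d (\<tau> k))
     \<and> (\<forall>k\<in>SO3. \<forall>l\<in>SO3. \<tau> (k ** l) = \<tau> k * \<tau> l)
     \<and> (\<forall>i<d. \<forall>j<d. continuous_on SO3 (\<lambda>k. \<tau> k $$ (i,j)))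
     \<and> irreducible_rep d \<tau>
     \<and> (\<forall>t. \<tau> (rot_x t) = mat_diag d (\<lambda>s. exp (\<i> * of_int (int s - int \<mu>) * of_real t))))"

definition P_proj :: "nat \<Rightarrow> nat \<Rightarrow> complex mat" where
  "P_proj \<mu> s = mat_diag (2*\<mu>+1) (\<lambda>j. if j = s then 1 else 0)"

definition lambda_st :: "nat \<Rightarrow> nat \<Rightarrow> int" where
  "lambda_st \<mu> s = int s - int \<mu>"

definition Phi :: "nat \<Rightarrow> (real^3^3 \<Rightarrow> complex mat) \<Rightarrow> real \<Rightarrow> nat \<Rightarrow> real^3 \<Rightarrow> complex mat" where
  "Phi \<mu> \<tau> \<rho> s y = of_nat (2*\<mu>+1) \<cdot>\<^sub>m haar_SO3_mat (2*\<mu>+1)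
      (\<lambda>k. exp (\<i> * of_real (\<rho> * (pt_o \<bullet> (k *v y)))) \<cdot>\<^sub>m
           (\<tau> (matrix_inv k) * P_proj \<mu> s * \<tau> k))"

text \<open>G_sharp F evaluated at the point (rho^2, lambda_(s,tau) rho), as a function of (rho, s).\<close>
definition G_sharp :: "nat \<Rightarrow> (real^3^3 \<Rightarrow> complex mat) \<Rightarrow> (real^3 \<Rightarrow> complex mat) \<Rightarrow> real \<Rightarrow> nat \<Rightarrow> complex" where
  "G_sharp \<mu> \<tau> F \<rho> s = (1 / of_nat (2*\<mu>+1)) *
      (\<integral>y. mtrace (F y * Phi \<mu> \<tau> \<rho> s (- y)) \<partial>lborel)"

fun pderivs :: "3 list \<Rightarrow> (real^3 \<Rightarrow> complex) \<Rightarrow> real^3 \<Rightarrow> complex" where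
  "pderivs [] f = f"
| "pderivs (i # is) f = (\<lambda>x. vector_derivative (\<lambda>t. pderivs is f (x + t *\<^sub>R axis i 1)) (at 0))"

definition schwartz :: "(real^3 \<Rightarrow> complex) \<Rightarrow> bool" where
  "schwartz f \<longleftrightarrow>
     (\<forall>is. continuous_on UNIV (pderivs is f)
        \<and> (\<forall>i x. (\<lambda>t. pderivs is f (x + t *\<^sub>R axis i 1)) differentiable (at 0))
        \<and> (\<forall>N::nat. bounded (range (\<lambda>x. (1 + norm x) ^ N * norm (pderivs is f x)))))"

definition schwartz_K :: "nat \<Rightarrow> (real^3^3 \<Rightarrow> complex mat) \<Rightarrow> (real^3 \<Rightarrow> complex mat) set" where
  "schwartz_K \<mu> \<tau> = {F. (\<forall>y. F y \<in> carrier_mat (2*\<mu>+1) (2*\<mu>+1))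
      \<and> (\<forall>i<2*\<mu>+1. \<forall>j<2*\<mu>+1. schwartz (\<lambda>y. F y $$ (i,j)))
      \<and> (\<forall>k\<in>SO3. \<forall>y. F (k *v y) = \<tau> k * F y * \<tau> (matrix_inv k))}"

definition even_part :: "(real^3 \<Rightarrow> complex mat) \<Rightarrow> real^3 \<Rightarrow> complex mat" where
  "even_part F y = (1/2 :: complex) \<cdot>\<^sub>m (F y + F (- y))"

definition odd_part :: "(real^3 \<Rightarrow> complex mat) \<Rightarrow> real^3 \<Rightarrow> complex mat" where
  "odd_part F y = (1/2 :: complex) \<cdot>\<^sub>m (F y - F (- y))"

end

theory Submission
  imports Defs
begin

lemma LBINT_reflect:
  fixes h :: "real \<Rightarrow> complex"
  assumes "0 \<le> L"
  shows "interval_lebesgue_integral lborel 0 (ereal L) (\<lambda>x. h (L - x)) = interval_lebesgue_integral lborel 0 (ereal L) h"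
proof -
  have e: "einterval 0 (ereal L) = {0<..<L}" by (auto simp: einterval_def zero_ereal_def)
  have "(\<integral>x. indicator {0<..<L} x *\<^sub>R h x \<partial>lborel) = \<bar>-1\<bar> *\<^sub>R (\<integral>x. indicator {0<..<L} (L + -1*x) *\<^sub>R h (L + -1*x) \<partial>lborel)"
    by (rule lborel_integral_real_affine) simp
  moreover have "(\<lambda>x. indicator {0<..<L} (L + -1*x) *\<^sub>R h (L + -1*x)) = (\<lambda>x. indicator {0<..<L} x *\<^sub>R h (L - x))"
    by (auto simp: indicator_def fun_eq_iff)
  ultimately show ?thesis using assms
    by (simp add: interval_lebesgue_integral_def set_lebesgue_integral_def e zero_ereal_def)
qed

lemma LBINT_shift:
  fixes h :: "real \<Rightarrow> complex"
  assumes per: "\<And>x. h (x + 2*pi) = h x"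
  shows "interval_lebesgue_integral lborel 0 (ereal (2*pi)) (\<lambda>x. h (x + pi)) = interval_lebesgue_integral lborel 0 (ereal (2*pi)) h"
proof -
  have e: "einterval 0 (ereal (2*pi)) = {0<..<2*pi}" by (auto simp: einterval_def zero_ereal_def)
  define T where "T = (\<lambda>x. indicator {0<..<2*pi} x *\<^sub>R h x)"
  define G where "G = (\<lambda>x. indicator {pi<..<3*pi} x *\<^sub>R h x)"
  define A1 where "A1 = (\<lambda>x. indicator {0<..<pi} x *\<^sub>R h x)"
  define A2 where "A2 = (\<lambda>x. indicator {pi<..<2*pi} x *\<^sub>R h x)"
  define A3 where "A3 = (\<lambda>x. indicator {2*pi<..<3*pi} x *\<^sub>R h x)"
  define Q1 where "Q1 = (\<lambda>x. indicator {pi} x *\<^sub>R h pi)"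
  define Q2 where "Q2 = (\<lambda>x. indicator {2*pi} x *\<^sub>R h (2*pi))"
  have pp: "pi > 0" by simp
  have LHS: "(\<integral>x. indicator {0<..<2*pi} x *\<^sub>R h (x + pi) \<partial>lborel) = integral\<^sup>L lborel G"
  proof -
    have "integral\<^sup>L lborel G = \<bar>1\<bar> *\<^sub>R (\<integral>x. G (pi + 1*x) \<partial>lborel)"
      by (rule lborel_integral_real_affine) simp
    moreover have "(\<lambda>x. G (pi + 1*x)) = (\<lambda>x. indicator {0<..<2*pi} x *\<^sub>R h (x + pi))"
      by (auto simp: G_def indicator_def fun_eq_iff add.commute)
    ultimately show ?thesis by simp
  qed
  have Ts: "T = (\<lambda>x. A1 x + Q1 x + A2 x)"
    using pp by (auto simp: T_def A1_def A2_def Q1_def indicator_def fun_eq_iff)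
  have Gs: "G = (\<lambda>x. A2 x + Q2 x + A3 x)"
    using pp by (auto simp: G_def A3_def A2_def Q2_def indicator_def fun_eq_iff)
  have A31: "(\<lambda>x. A3 (2*pi + 1*x)) = A1"
    using per by (auto simp: A1_def A3_def indicator_def fun_eq_iff add.commute)
  have A13: "(\<lambda>x. A1 (-(2*pi) + 1*x)) = A3"
  proof -
    have "h x = h (x - 2*pi)" for x using per[of "x - 2*pi"] by simp
    then show ?thesis by (auto simp: A1_def A3_def indicator_def fun_eq_iff)
  qed
  have iQ1: "integrable lborel Q1" and iQ2: "integrable lborel Q2"
    unfolding Q1_def Q2_def by (auto intro!: integrable_scaleR_left)
  have zQ1: "integral\<^sup>L lborel Q1 = 0" and zQ2: "integral\<^sup>L lborel Q2 = 0"
    unfolding Q1_def Q2_def by (simp_all add: measure_def)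
  have A1T: "A1 = (\<lambda>x. indicator {0<..<pi} x *\<^sub>R T x)"
    using pp by (auto simp: A1_def T_def indicator_def fun_eq_iff)
  have A2T: "A2 = (\<lambda>x. indicator {pi<..<2*pi} x *\<^sub>R T x)"
    using pp by (auto simp: A2_def T_def indicator_def fun_eq_iff)
  have A2G: "A2 = (\<lambda>x. indicator {pi<..<2*pi} x *\<^sub>R G x)"
    using pp by (auto simp: A2_def G_def indicator_def fun_eq_iff)
  have A3G: "A3 = (\<lambda>x. indicator {2*pi<..<3*pi} x *\<^sub>R G x)"
    using pp by (auto simp: A3_def G_def indicator_def fun_eq_iff)
  have TG: "integral\<^sup>L lborel T = integral\<^sup>L lborel G"
  proof (cases "integrable lborel T")
    case True
    have i1: "integrable lborel A1" unfolding A1T by (rule integrable_mult_indicator) (simp_all add: True)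
    have i2: "integrable lborel A2" unfolding A2T by (rule integrable_mult_indicator) (simp_all add: True)
    have i3: "integrable lborel A3" unfolding A13[symmetric]
      by (rule lborel_integrable_real_affine[OF i1]) simp
    have "integral\<^sup>L lborel A3 = \<bar>1\<bar> *\<^sub>R (\<integral>x. A3 (2*pi + 1*x) \<partial>lborel)"
      by (rule lborel_integral_real_affine) simp
    then have e3: "integral\<^sup>L lborel A3 = integral\<^sup>L lborel A1" unfolding A31 by simp
    show ?thesis unfolding Ts Gs
      using i1 i2 i3 iQ1 iQ2 zQ1 zQ2 e3 by simp
  next
    case False
    have "\<not> integrable lborel G"
    proof
      assume iG: "integrable lborel G"
      have i2: "integrable lborel A2" unfolding A2G by (rule integrable_mult_indicator) (simp_all add: iG)
      have i3: "integrable lborel A3" unfolding A3G by (rule integrable_mult_indicator) (simp_all add: iG)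
      have i1: "integrable lborel A1" unfolding A31[symmetric]
        by (rule lborel_integrable_real_affine[OF i3]) simp
      have "integrable lborel T" unfolding Ts using i1 i2 iQ1 by simp
      with False show False by simp
    qed
    with False show ?thesis by (simp add: not_integrable_integral_eq)
  qed
  show ?thesis
    using LHS TG by (simp add: interval_lebesgue_integral_def set_lebesgue_integral_def e zero_ereal_def T_def)
qed

definition D3 :: "real^3^3" where
  "D3 = vector [vector [-1, 0, 0], vector [0, -1, 0], vector [0, 0, 1]]"
lemmas cvec_eq_iff = Finite_Cartesian_Product.vec_eq_iff

lemma D3_euler: "D3 ** (rot_x a ** rot_y b ** rot_x c) = rot_x (2*pi - a) ** rot_y (pi - b) ** rot_x (c + pi)"
  unfolding D3_def rot_x_def rot_y_def
  by (simp add: cvec_eq_iff forall_3 matrix_matrix_mult_def sum_3 sin_diff cos_diff sin_add cos_add algebra_simps)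

lemma rot_x_period: "rot_x (c + 2*pi) = rot_x c"
  unfolding rot_x_def by (simp add: sin_add cos_add)

lemma haar_D3: "haar_SO3 (\<lambda>k. f (D3 ** k)) = haar_SO3 f"
proof -
  define w where "w = (\<lambda>b::real. complex_of_real (sin b / (8 * pi^2)))"
  have wr: "w (pi - b) = w b" for b by (simp add: w_def)
  have c_step: "interval_lebesgue_integral lborel 0 (ereal (2*pi)) (\<lambda>c. w b * f (rot_x A ** rot_y B ** rot_x (c + pi)))
      = interval_lebesgue_integral lborel 0 (ereal (2*pi)) (\<lambda>c. w b * f (rot_x A ** rot_y B ** rot_x c))" for A B b
    by (rule LBINT_shift[where h="\<lambda>c. w b * f (rot_x A ** rot_y B ** rot_x c)"]) (simp add: rot_x_period)
  define H where "H = (\<lambda>A b. interval_lebesgue_integral lborel 0 (ereal (2*pi)) (\<lambda>c. w b * f (rot_x A ** rot_y b ** rot_x c)))"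
  have b_step: "interval_lebesgue_integral lborel 0 (ereal pi) (\<lambda>b. H A (pi - b)) = interval_lebesgue_integral lborel 0 (ereal pi) (H A)" for A
    by (rule LBINT_reflect) simp
  define K where "K = (\<lambda>a. interval_lebesgue_integral lborel 0 (ereal pi) (H a))"
  have a_step: "interval_lebesgue_integral lborel 0 (ereal (2*pi)) (\<lambda>a. K (2*pi - a)) = interval_lebesgue_integral lborel 0 (ereal (2*pi)) K"
    by (rule LBINT_reflect) simp
  have "haar_SO3 (\<lambda>k. f (D3 ** k)) = interval_lebesgue_integral lborel 0 (ereal (2*pi)) (\<lambda>a. 
        interval_lebesgue_integral lborel 0 (ereal pi) (\<lambda>b.
        interval_lebesgue_integral lborel 0 (ereal (2*pi)) (\<lambda>c.
        w b * f (rot_x (2*pi - a) ** rot_y (pi - b) ** rot_x (c + pi)))))"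
    unfolding haar_SO3_def D3_euler w_def ..
  also have "\<dots> = interval_lebesgue_integral lborel 0 (ereal (2*pi)) (\<lambda>a. 
        interval_lebesgue_integral lborel 0 (ereal pi) (\<lambda>b. H (2*pi - a) (pi - b)))"
    unfolding c_step H_def wr ..
  also have "\<dots> = interval_lebesgue_integral lborel 0 (ereal (2*pi)) (\<lambda>a. K (2*pi - a))"
    unfolding b_step K_def ..
  also have "\<dots> = interval_lebesgue_integral lborel 0 (ereal (2*pi)) K"
    by (rule a_step)
  also have "\<dots> = haar_SO3 f"
    unfolding K_def H_def haar_SO3_def w_def ..
  finally show ?thesis .
qed

abbreviation I3 :: "real^3^3" where "I3 \<equiv> Finite_Cartesian_Product.mat 1"
lemmas cmat_def = Finite_Cartesian_Product.mat_def

lemma sc1: "sin t * sin t + cos t * cos t = (1::real)"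
  by (metis sin_cos_squared_add3 add.commute)

lemma rot_x_0: "rot_x 0 = I3"
  unfolding rot_x_def by (simp add: cvec_eq_iff forall_3 cmat_def)

lemma D3_D3: "D3 ** D3 = I3"
  unfolding D3_def by (simp add: cvec_eq_iff forall_3 cmat_def matrix_matrix_mult_def sum_3)

lemma D3_rot_x: "D3 ** rot_x t = rot_x (-t) ** D3"
  unfolding D3_def rot_x_def by (simp add: cvec_eq_iff forall_3 matrix_matrix_mult_def sum_3)

lemma transpose_D3: "transpose D3 = D3"
  unfolding D3_def by (simp add: cvec_eq_iff forall_3 transpose_def)

lemma rot_x_SO3: "rot_x t \<in> SO3"
  unfolding SO3_def rotation_matrix_def orthogonal_matrix
  unfolding rot_x_def by (simp add: cvec_eq_iff forall_3 cmat_def matrix_matrix_mult_def sum_3 transpose_def det_3 sc1)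

lemma rot_y_SO3: "rot_y t \<in> SO3"
  unfolding SO3_def rotation_matrix_def orthogonal_matrix
  unfolding rot_y_def by (simp add: cvec_eq_iff forall_3 cmat_def matrix_matrix_mult_def sum_3 transpose_def det_3 sc1)

lemma D3_SO3: "D3 \<in> SO3"
  unfolding SO3_def rotation_matrix_def orthogonal_matrix
  unfolding D3_def by (simp add: cvec_eq_iff forall_3 cmat_def matrix_matrix_mult_def sum_3 transpose_def det_3)

lemma pt_o_D3: "pt_o \<bullet> (D3 *v z) = - (pt_o \<bullet> z)"
  unfolding pt_o_def D3_def by (simp add: inner_vec_def sum_3 matrix_vector_mult_def axis_def)

lemma SO3_mult: "k \<in> SO3 \<Longrightarrow> l \<in> SO3 \<Longrightarrow> k ** l \<in> SO3"
  unfolding SO3_def rotation_matrix_def by (simp add: orthogonal_matrix_mul det_mul)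

lemma SO3_transpose: "k \<in> SO3 \<Longrightarrow> transpose k \<in> SO3"
  unfolding SO3_def rotation_matrix_def by (simp add: det_transpose)

lemma matrix_inv_SO3: assumes "k \<in> SO3" shows "matrix_inv k = transpose k"
proof -
  have o: "k ** transpose k = I3" "transpose k ** k = I3"
    using assms unfolding SO3_def rotation_matrix_def orthogonal_matrix_def by auto
  have "\<exists>A'. k ** A' = I3 \<and> A' ** k = I3" using o by blast
  from someI_ex[OF this] have s: "k ** matrix_inv k = I3" "matrix_inv k ** k = I3"
    unfolding matrix_inv_def by auto
  have "matrix_inv k = matrix_inv k ** (k ** transpose k)" using o by simp
  also have "\<dots> = (matrix_inv k ** k) ** transpose k" by (simp add: matrix_mul_assoc)
  also have "\<dots> = transpose k" using s by simp
  finally show ?thesis .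
qed

lemma matrix_inv_D3k: "k \<in> SO3 \<Longrightarrow> matrix_inv (D3 ** k) = matrix_inv k ** D3"
  using SO3_mult[OF D3_SO3] by (simp add: matrix_inv_SO3 matrix_transpose_mul transpose_D3)

lemma pt_o_D3k: "pt_o \<bullet> ((D3 ** k) *v (- y)) = pt_o \<bullet> (k *v y)"
proof -
  have "(D3 ** k) *v (- y) = D3 *v (k *v (- y))" by (simp add: matrix_vector_mul_assoc)
  moreover have "k *v (- y) = - (k *v y)"
    by (metis matrix_vector_mult_scaleR scaleR_minus1_left)
  ultimately show ?thesis by (simp add: pt_o_D3 inner_minus_right)
qed

context
  fixes \<mu> :: nat and \<tau> :: "real^3^3 \<Rightarrow> complex mat"
  assumes tau: "is_tau_mu \<mu> \<tau>"
begin

lemma tau_carrier: "k \<in> SO3 \<Longrightarrow> \<tau> k \<in> carrier_mat (2*\<mu>+1) (2*\<mu>+1)"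
  and tau_hom: "k \<in> SO3 \<Longrightarrow> l \<in> SO3 \<Longrightarrow> \<tau> (k ** l) = \<tau> k * \<tau> l"
  and tau_rot: "\<tau> (rot_x t) = mat_diag (2*\<mu>+1) (\<lambda>s. exp (\<i> * of_int (int s - int \<mu>) * of_real t))"
  using tau unfolding is_tau_mu_def unitary_mat_def Let_def by auto

lemma W_sq: "\<tau> D3 * \<tau> D3 = 1\<^sub>m (2*\<mu>+1)"
proof -
  have "\<tau> D3 * \<tau> D3 = \<tau> (rot_x 0)" using tau_hom[OF D3_SO3 D3_SO3] D3_D3 rot_x_0 by simp
  then show ?thesis by (simp add: tau_rot)
qed

lemma W_anti:
  assumes i: "i < 2*\<mu>+1" and j: "j < 2*\<mu>+1" and ij: "i + j \<noteq> 2*\<mu>"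
  shows "\<tau> D3 $$ (i,j) = 0"
proof -
  define W where "W = \<tau> D3"
  define e where "e = (\<lambda>s t. exp (\<i> * of_int (int s - int \<mu>) * of_real t))"
  have Wc: "W \<in> carrier_mat (2*\<mu>+1) (2*\<mu>+1)" unfolding W_def by (rule tau_carrier[OF D3_SO3])
  have eq: "W * mat_diag (2*\<mu>+1) (\<lambda>s. e s t) = mat_diag (2*\<mu>+1) (\<lambda>s. e s (-t)) * W" for t
  proof -
    have "W * mat_diag (2*\<mu>+1) (\<lambda>s. e s t) = \<tau> (D3 ** rot_x t)"
      unfolding W_def e_def by (simp add: tau_hom[OF D3_SO3 rot_x_SO3] tau_rot)
    also have "\<dots> = \<tau> (rot_x (-t) ** D3)" by (simp add: D3_rot_x)
    also have "\<dots> = mat_diag (2*\<mu>+1) (\<lambda>s. e s (-t)) * W"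
      unfolding W_def e_def by (simp add: tau_hom[OF rot_x_SO3 D3_SO3] tau_rot)
    finally show ?thesis .
  qed
  have entry: "W $$ (i,j) * e j t = e i (-t) * W $$ (i,j)" for t
  proof -
    have "(W * mat_diag (2*\<mu>+1) (\<lambda>s. e s t)) $$ (i,j) = (mat_diag (2*\<mu>+1) (\<lambda>s. e s (-t)) * W) $$ (i,j)"
      using eq by simp
    then show ?thesis using Wc i j by (simp add: mat_diag_mult_left mat_diag_mult_right)
  qed
  define n where "n = (int i - int \<mu>) + (int j - int \<mu>)"
  have n0: "n \<noteq> 0" using ij unfolding n_def by linarith
  define t where "t = pi / real_of_int n"
  have nt: "real_of_int n * t = pi" using n0 unfolding t_def by simp
  have "\<i> * of_int (int j - int \<mu>) * of_real t = \<i> * pi + \<i> * of_int (int i - int \<mu>) * of_real (-t)"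
  proof -
    have "complex_of_real (real_of_int n * t) = complex_of_real pi" using nt by simp
    then have "\<i> * (of_int n * complex_of_real t) = \<i> * complex_of_real pi" by simp
    then show ?thesis unfolding n_def by (simp add: algebra_simps)
  qed
  then have "e j t = exp (\<i> * pi + \<i> * of_int (int i - int \<mu>) * of_real (-t))" unfolding e_def by (rule arg_cong[where f=exp])
  moreover have "exp (\<i> * complex_of_real pi) = -1" by (metis exp_pi_i mult.commute)
  ultimately have ej: "e j t = - e i (-t)" unfolding e_def exp_add by simp
  have ne: "e i (-t) \<noteq> 0" unfolding e_def by simp
  have "e i (-t) * (2 * W $$ (i,j)) = 0" using entry[of t] unfolding ej by (simp add: algebra_simps)
  then show ?thesis using ne unfolding W_def by simp
qed


lemma W_diag:
  assumes i: "i < 2*\<mu>+1"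
  shows "\<tau> D3 $$ (i, 2*\<mu>-i) * \<tau> D3 $$ (2*\<mu>-i, i) = 1"
proof -
  define W where "W = \<tau> D3"
  have Wc: "W \<in> carrier_mat (2*\<mu>+1) (2*\<mu>+1)" unfolding W_def by (rule tau_carrier[OF D3_SO3])
  have "(W * W) $$ (i,i) = 1" using W_sq i unfolding W_def by simp
  then have "(\<Sum>k\<in>{0..<2*\<mu>+1}. W $$ (i,k) * W $$ (k,i)) = 1"
    using Wc i by (simp add: scalar_prod_def)
  moreover have "(\<Sum>k\<in>{0..<2*\<mu>+1}. W $$ (i,k) * W $$ (k,i)) = (\<Sum>k\<in>{0..<2*\<mu>+1}. if k = 2*\<mu>-i then W $$ (i,k) * W $$ (k,i) else 0)"
    by (rule sum.cong) (use W_anti i in \<open>auto simp: W_def\<close>)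
  moreover have "\<dots> = W $$ (i, 2*\<mu>-i) * W $$ (2*\<mu>-i, i)" using i by (simp add: sum.delta')
  ultimately show ?thesis unfolding W_def by simp
qed

lemma WPW:
  assumes s: "s \<le> 2*\<mu>"
  shows "\<tau> D3 * P_proj \<mu> s * \<tau> D3 = P_proj \<mu> (2*\<mu> - s)"
proof -
  define W where "W = \<tau> D3"
  have Wc: "W \<in> carrier_mat (2*\<mu>+1) (2*\<mu>+1)" unfolding W_def by (rule tau_carrier[OF D3_SO3])
  have WP: "W * P_proj \<mu> s = mat (2*\<mu>+1) (2*\<mu>+1) (\<lambda>(i,j). W $$ (i,j) * (if j = s then 1 else 0))"
    unfolding P_proj_def by (rule mat_diag_mult_right[OF Wc])
  have ent: "(W * P_proj \<mu> s * W) $$ (i,j) = W $$ (i,s) * W $$ (s,j)" if i: "i < 2*\<mu>+1" and j: "j < 2*\<mu>+1" for i j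
  proof -
    have "(W * P_proj \<mu> s * W) $$ (i,j) = (\<Sum>k\<in>{0..<2*\<mu>+1}. (W $$ (i,k) * (if k = s then 1 else 0)) * W $$ (k,j))"
      unfolding WP using Wc i j by (simp add: scalar_prod_def)
    also have "\<dots> = (\<Sum>k\<in>{0..<2*\<mu>+1}. if k = s then W $$ (i,k) * W $$ (k,j) else 0)"
      by (rule sum.cong) auto
    also have "\<dots> = W $$ (i,s) * W $$ (s,j)" using s by (simp add: sum.delta')
    finally show ?thesis .
  qed
  show ?thesis unfolding W_def[symmetric]
  proof (rule eq_matI)
    fix i j assume i: "i < dim_row (P_proj \<mu> (2*\<mu> - s))" and j: "j < dim_col (P_proj \<mu> (2*\<mu> - s))"
    then have i': "i < 2*\<mu>+1" and j': "j < 2*\<mu>+1" by (auto simp: P_proj_def mat_diag_def)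
    have rhs: "P_proj \<mu> (2*\<mu> - s) $$ (i,j) = (if i = j \<and> j = 2*\<mu> - s then 1 else 0)"
      using i' j' by (simp add: P_proj_def mat_diag_def)
    show "(W * P_proj \<mu> s * W) $$ (i,j) = P_proj \<mu> (2*\<mu> - s) $$ (i,j)"
      unfolding ent[OF i' j'] rhs
    proof (cases "i = 2*\<mu> - s \<and> j = 2*\<mu> - s")
      case True
      have "2*\<mu> - i = s" using True s by simp
      then show "W $$ (i,s) * W $$ (s,j) = (if i = j \<and> j = 2*\<mu> - s then 1 else 0)"
        using W_diag[OF i'] True unfolding W_def by simp
    next
      case False
      then have "W $$ (i,s) = 0 \<or> W $$ (s,j) = 0"
        using W_anti[OF i', of s] W_anti[of s j] j' s unfolding W_def by force
      then show "W $$ (i,s) * W $$ (s,j) = (if i = j \<and> j = 2*\<mu> - s then 1 else 0)"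
        using False by auto
    qed
  qed (use Wc in \<open>auto simp: P_proj_def mat_diag_def\<close>)
qed

lemma integrand_D3:
  assumes k: "k \<in> SO3" and s: "s \<le> 2*\<mu>"
  shows "exp (\<i> * of_real (\<rho> * (pt_o \<bullet> ((D3 ** k) *v (- y))))) \<cdot>\<^sub>m
           (\<tau> (matrix_inv (D3 ** k)) * P_proj \<mu> s * \<tau> (D3 ** k))
       = exp (\<i> * of_real (\<rho> * (pt_o \<bullet> (k *v y)))) \<cdot>\<^sub>m
           (\<tau> (matrix_inv k) * P_proj \<mu> (2*\<mu> - s) * \<tau> k)"
proof -
  have ik: "matrix_inv k \<in> SO3" using k by (simp add: matrix_inv_SO3 SO3_transpose)
  have c1: "\<tau> (matrix_inv k) \<in> carrier_mat (2*\<mu>+1) (2*\<mu>+1)" by (rule tau_carrier[OF ik])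
  have c2: "\<tau> k \<in> carrier_mat (2*\<mu>+1) (2*\<mu>+1)" by (rule tau_carrier[OF k])
  have cW: "\<tau> D3 \<in> carrier_mat (2*\<mu>+1) (2*\<mu>+1)" by (rule tau_carrier[OF D3_SO3])
  have cP: "P_proj \<mu> s \<in> carrier_mat (2*\<mu>+1) (2*\<mu>+1)" by (simp add: P_proj_def)
  have "\<tau> (matrix_inv (D3 ** k)) * P_proj \<mu> s * \<tau> (D3 ** k)
      = (\<tau> (matrix_inv k) * \<tau> D3) * P_proj \<mu> s * (\<tau> D3 * \<tau> k)"
    using k by (simp add: matrix_inv_D3k tau_hom[OF ik D3_SO3] tau_hom[OF D3_SO3 k])
  also have "\<dots> = \<tau> (matrix_inv k) * (\<tau> D3 * P_proj \<mu> s * \<tau> D3) * \<tau> k"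
  proof -
    have cWP: "\<tau> D3 * P_proj \<mu> s \<in> carrier_mat (2*\<mu>+1) (2*\<mu>+1)" using cW cP by (rule mult_carrier_mat)
    have cX: "\<tau> (matrix_inv k) * (\<tau> D3 * P_proj \<mu> s) \<in> carrier_mat (2*\<mu>+1) (2*\<mu>+1)" using c1 cWP by (rule mult_carrier_mat)
    have "(\<tau> (matrix_inv k) * \<tau> D3) * P_proj \<mu> s = \<tau> (matrix_inv k) * (\<tau> D3 * P_proj \<mu> s)"
      by (rule assoc_mult_mat[OF c1 cW cP])
    moreover have "(\<tau> (matrix_inv k) * (\<tau> D3 * P_proj \<mu> s)) * (\<tau> D3 * \<tau> k) = ((\<tau> (matrix_inv k) * (\<tau> D3 * P_proj \<mu> s)) * \<tau> D3) * \<tau> k"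
      by (rule assoc_mult_mat[OF cX cW c2, symmetric])
    moreover have "(\<tau> (matrix_inv k) * (\<tau> D3 * P_proj \<mu> s)) * \<tau> D3 = \<tau> (matrix_inv k) * ((\<tau> D3 * P_proj \<mu> s) * \<tau> D3)"
      by (rule assoc_mult_mat[OF c1 cWP cW])
    ultimately show ?thesis by simp
  qed
  also have "\<dots> = \<tau> (matrix_inv k) * P_proj \<mu> (2*\<mu> - s) * \<tau> k" using WPW[OF s] by simp
  finally show ?thesis by (simp add: pt_o_D3k)
qed


lemma Phi_sym:
  assumes s: "s \<le> 2*\<mu>"
  shows "Phi \<mu> \<tau> \<rho> (2*\<mu> - s) y = Phi \<mu> \<tau> \<rho> s (- y)"
proof -
  have "haar_SO3 (\<lambda>k. (exp (\<i> * of_real (\<rho> * (pt_o \<bullet> (k *v y)))) \<cdot>\<^sub>m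
           (\<tau> (matrix_inv k) * P_proj \<mu> (2*\<mu> - s) * \<tau> k)) $$ (i,j))
      = haar_SO3 (\<lambda>k. (exp (\<i> * of_real (\<rho> * (pt_o \<bullet> (k *v (- y))))) \<cdot>\<^sub>m
           (\<tau> (matrix_inv k) * P_proj \<mu> s * \<tau> k)) $$ (i,j))" for i j
  proof -
    have "haar_SO3 (\<lambda>k. (exp (\<i> * of_real (\<rho> * (pt_o \<bullet> (k *v (- y))))) \<cdot>\<^sub>m
           (\<tau> (matrix_inv k) * P_proj \<mu> s * \<tau> k)) $$ (i,j))
        = haar_SO3 (\<lambda>k. (exp (\<i> * of_real (\<rho> * (pt_o \<bullet> ((D3 ** k) *v (- y))))) \<cdot>\<^sub>m
           (\<tau> (matrix_inv (D3 ** k)) * P_proj \<mu> s * \<tau> (D3 ** k))) $$ (i,j))"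
      by (rule haar_D3[symmetric])
    also have "\<dots> = haar_SO3 (\<lambda>k. (exp (\<i> * of_real (\<rho> * (pt_o \<bullet> (k *v y)))) \<cdot>\<^sub>m
           (\<tau> (matrix_inv k) * P_proj \<mu> (2*\<mu> - s) * \<tau> k)) $$ (i,j))"
      unfolding haar_SO3_def
      using integrand_D3[OF SO3_mult[OF SO3_mult[OF rot_x_SO3 rot_y_SO3] rot_x_SO3] s] by simp
    finally show ?thesis by simp
  qed
  then show ?thesis unfolding Phi_def haar_SO3_mat_def by simp
qed

lemma Phi_carrier: "Phi \<mu> \<tau> \<rho> s y \<in> carrier_mat (2*\<mu>+1) (2*\<mu>+1)"
  unfolding Phi_def haar_SO3_mat_def by simp

end

lemma lborel_neg3:
  "distr lborel borel (\<lambda>x::real^3. - x) = lborel"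
  using lborel_affine[of "-1::real" "0::real^3"] by (simp add: density_1)

lemma integrable_neg3:
  fixes f :: "real^3 \<Rightarrow> complex"
  assumes "integrable lborel f"
  shows "integrable lborel (\<lambda>y. f (- y))" and "(\<integral>y. f (- y) \<partial>lborel) = integral\<^sup>L lborel f"
proof -
  have m: "f \<in> borel_measurable borel" using borel_measurable_integrable[OF assms] by simp
  have "integrable (distr lborel borel (\<lambda>x::real^3. - x)) f \<longleftrightarrow> integrable lborel (\<lambda>y. f (- y))"
    by (rule integrable_distr_eq) (simp_all add: m)
  then show "integrable lborel (\<lambda>y. f (- y))" using assms by (simp add: lborel_neg3)
  have "integral\<^sup>L (distr lborel borel (\<lambda>x::real^3. - x)) f = (\<integral>y. f (- y) \<partial>lborel)"
    by (rule integral_distr) (simp_all add: m)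
  then show "(\<integral>y. f (- y) \<partial>lborel) = integral\<^sup>L lborel f" by (simp add: lborel_neg3)
qed

lemma integral_neg3:
  fixes f :: "real^3 \<Rightarrow> complex"
  shows "(\<integral>y. f (- y) \<partial>lborel) = integral\<^sup>L lborel f"
proof (cases "integrable lborel f")
  case True then show ?thesis by (rule integrable_neg3(2))
next
  case False
  have "\<not> integrable lborel (\<lambda>y. f (- y))"
  proof
    assume "integrable lborel (\<lambda>y. f (- y))"
    from integrable_neg3(1)[OF this] have "integrable lborel f" by simp
    with False show False by simp
  qed
  with False show ?thesis by (simp add: not_integrable_integral_eq)
qed


lemma mtrace_neg:
  assumes A: "A \<in> carrier_mat d d" and A': "A' \<in> carrier_mat d d" and B: "B \<in> carrier_mat d d"
    and e: "\<And>i k. i < d \<Longrightarrow> k < d \<Longrightarrow> A' $$ (i,k) = - (A $$ (i,k))"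
  shows "mtrace (A' * B) = - mtrace (A * B)"
proof -
  have "mtrace (A' * B) = (\<Sum>i<d. \<Sum>k\<in>{0..<d}. A' $$ (i,k) * B $$ (k,i))"
    using A A' B by (simp add: mtrace_def scalar_prod_def)
  also have "\<dots> = (\<Sum>i<d. \<Sum>k\<in>{0..<d}. - (A $$ (i,k) * B $$ (k,i)))"
    by (intro sum.cong refl) (simp add: e)
  also have "\<dots> = - (\<Sum>i<d. \<Sum>k\<in>{0..<d}. A $$ (i,k) * B $$ (k,i))"
    by (simp add: sum_negf)
  also have "(\<Sum>i<d. \<Sum>k\<in>{0..<d}. A $$ (i,k) * B $$ (k,i)) = mtrace (A * B)"
    using A B by (simp add: mtrace_def scalar_prod_def)
  finally show ?thesis .
qed

lemma G_flip:
  assumes tau: "is_tau_mu \<mu> \<tau>" and s: "s \<le> 2*\<mu>"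
  shows "G_sharp \<mu> \<tau> H \<rho> (2*\<mu> - s) = (1 / of_nat (2*\<mu>+1)) *
      (\<integral>y. mtrace (H (- y) * Phi \<mu> \<tau> \<rho> s (- y)) \<partial>lborel)"
proof -
  have "G_sharp \<mu> \<tau> H \<rho> (2*\<mu> - s) = (1 / of_nat (2*\<mu>+1)) *
      (\<integral>y. mtrace (H y * Phi \<mu> \<tau> \<rho> s y) \<partial>lborel)"
    unfolding G_sharp_def using Phi_sym[OF tau s, of \<rho> "- _"] by simp
  also have "(\<integral>y. mtrace (H y * Phi \<mu> \<tau> \<rho> s y) \<partial>lborel) = (\<integral>y. mtrace (H (- y) * Phi \<mu> \<tau> \<rho> s (- y)) \<partial>lborel)"
    by (rule integral_neg3[symmetric])
  finally show ?thesis .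
qed

theorem corollary4p5:
  fixes \<mu> :: nat and \<tau> :: "real^3^3 \<Rightarrow> complex mat"
  assumes "is_tau_mu \<mu> \<tau>"
  shows "(\<forall>y \<rho> s. \<rho> \<ge> 0 \<longrightarrow> s \<le> 2*\<mu> \<longrightarrow>
            Phi \<mu> \<tau> \<rho> (2*\<mu> - s) y = Phi \<mu> \<tau> \<rho> s (- y))
       \<and> (\<forall>F \<in> schwartz_K \<mu> \<tau>. \<forall>\<rho> s. \<rho> \<ge> 0 \<longrightarrow> s \<le> 2*\<mu> \<longrightarrow>
            G_sharp \<mu> \<tau> (even_part F) \<rho> s = G_sharp \<mu> \<tau> (even_part F) \<rho> (2*\<mu> - s)
          \<and> G_sharp \<mu> \<tau> (odd_part F) \<rho> s = - G_sharp \<mu> \<tau> (odd_part F) \<rho> (2*\<mu> - s))"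
proof (intro conjI allI impI ballI)
  fix y \<rho> s assume "s \<le> 2*\<mu>"
  then show "Phi \<mu> \<tau> \<rho> (2*\<mu> - s) y = Phi \<mu> \<tau> \<rho> s (- y)" by (rule Phi_sym[OF assms])
next
  fix F \<rho> s assume F: "F \<in> schwartz_K \<mu> \<tau>" and s: "s \<le> 2*\<mu>"
  have Fc: "F y \<in> carrier_mat (2*\<mu>+1) (2*\<mu>+1)" for y using F unfolding schwartz_K_def by auto
  have ev: "even_part F (- y) = even_part F y" for y
    unfolding even_part_def using Fc[of y] Fc[of "-y"] by (simp add: comm_add_mat[of _ "2*\<mu>+1" "2*\<mu>+1"])
  have "G_sharp \<mu> \<tau> (even_part F) \<rho> (2*\<mu> - s) = (1 / of_nat (2*\<mu>+1)) *
      (\<integral>y. mtrace (even_part F (- y) * Phi \<mu> \<tau> \<rho> s (- y)) \<partial>lborel)"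
    by (rule G_flip[OF assms s])
  also have "\<dots> = G_sharp \<mu> \<tau> (even_part F) \<rho> s" unfolding ev G_sharp_def ..
  finally show "G_sharp \<mu> \<tau> (even_part F) \<rho> s = G_sharp \<mu> \<tau> (even_part F) \<rho> (2*\<mu> - s)" by simp
  have od: "mtrace (odd_part F (- y) * Phi \<mu> \<tau> \<rho> s (- y)) = - mtrace (odd_part F y * Phi \<mu> \<tau> \<rho> s (- y))" for y
  proof (rule mtrace_neg)
    show "odd_part F y \<in> carrier_mat (2*\<mu>+1) (2*\<mu>+1)" "odd_part F (-y) \<in> carrier_mat (2*\<mu>+1) (2*\<mu>+1)"
      unfolding odd_part_def using Fc[of y] Fc[of "-y"] by auto
    show "Phi \<mu> \<tau> \<rho> s (- y) \<in> carrier_mat (2*\<mu>+1) (2*\<mu>+1)" by (rule Phi_carrier[OF assms])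
    fix i k assume "i < 2*\<mu>+1" "k < 2*\<mu>+1"
    then show "odd_part F (- y) $$ (i, k) = - (odd_part F y $$ (i, k))"
      unfolding odd_part_def using Fc[of y] Fc[of "-y"] by (simp add: algebra_simps)
  qed
  have "G_sharp \<mu> \<tau> (odd_part F) \<rho> (2*\<mu> - s) = (1 / of_nat (2*\<mu>+1)) *
      (\<integral>y. mtrace (odd_part F (- y) * Phi \<mu> \<tau> \<rho> s (- y)) \<partial>lborel)"
    by (rule G_flip[OF assms s])
  also have "\<dots> = - G_sharp \<mu> \<tau> (odd_part F) \<rho> s" unfolding od G_sharp_def by simp
  finally have oddeq: "G_sharp \<mu> \<tau> (odd_part F) \<rho> (2*\<mu> - s) = - G_sharp \<mu> \<tau> (odd_part F) \<rho> s" .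
  show "G_sharp \<mu> \<tau> (odd_part F) \<rho> s = - G_sharp \<mu> \<tau> (odd_part F) \<rho> (2*\<mu> - s)" using oddeq by simp
qed

end
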